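(* Let $n\geq5$. For every $1\leq i\leq n-1$ and every integer $0\leq s < i/2$, we have \[w_{i,s}\leq \frac{2}{(i+1)|L_{i+1}|}.\]
   Context: In $\{0,1,2\}^n$ (ordered coordinatewise), $L_i$ is the set of vectors with coordinate sum $i$, $L_i^s$ the elements of $L_i$ with exactly $s$ coordinates equal to $2$, $L_i^{\geq s}=\bigcup_{r\geq s}L_i^r$. For such $i,s$: \[w_{i,s}=\frac{|L_i||L_{i+1}^{\geq s+1}| - |L_{i+1}||L_i^{\geq s+1}|}{|L_i^s||L_i||L_{i+1}|(i-2s)}.\] *)

theory Defs
  imports Complex_Main
begin

text \<open>Vectors of {0,1,2}^n are represented as functions nat => nat with values
  in {0,1,2} on {0..<n} and value 0 outside {0..<n}.\<close>

definition cube :: "nat \<Rightarrow> (nat \<Rightarrow> nat) set" where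
  "cube n = {x. (\<forall>j<n. x j \<le> 2) \<and> (\<forall>j\<ge>n. x j = 0)}"

definition twos :: "nat \<Rightarrow> (nat \<Rightarrow> nat) \<Rightarrow> nat" where
  "twos n x = card {j. j < n \<and> x j = 2}"

definition lev :: "nat \<Rightarrow> nat \<Rightarrow> (nat \<Rightarrow> nat) set" where
  "lev n i = {x \<in> cube n. (\<Sum>j<n. x j) = i}"

definition levs :: "nat \<Rightarrow> nat \<Rightarrow> nat \<Rightarrow> (nat \<Rightarrow> nat) set" where
  "levs n i s = {x \<in> lev n i. twos n x = s}"

definition levge :: "nat \<Rightarrow> nat \<Rightarrow> nat \<Rightarrow> (nat \<Rightarrow> nat) set" where
  "levge n i s = {x \<in> lev n i. twos n x \<ge> s}"

definition w :: "nat \<Rightarrow> nat \<Rightarrow> nat \<Rightarrow> real" where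
  "w n i s =
     (real (card (lev n i)) * real (card (levge n (i+1) (s+1)))
      - real (card (lev n (i+1))) * real (card (levge n i (s+1))))
     / (real (card (levs n i s)) * real (card (lev n i)) * real (card (lev n (i+1)))
        * (real i - 2 * real s))"

end

theory Submission
  imports Defs
begin

lemma finite_cube: "finite (cube n)"
proof -
  have "cube n \<subseteq> {f. \<forall>x. (x \<in> {..<n} \<longrightarrow> f x \<in> {..2::nat}) \<and> (x \<notin> {..<n} \<longrightarrow> f x = 0)}"
    unfolding cube_def by auto
  then show ?thesis by (rule finite_subset) (rule finite_set_of_finite_funs, auto)
qed

lemma finite_lev: "finite (lev n i)"
  unfolding lev_def using finite_cube by auto

lemma sum_upd:
  fixes f :: "nat \<Rightarrow> nat"
  assumes "j < n"
  shows "(\<Sum>k<n. (f(j:=v)) k) + f j = (\<Sum>k<n. f k) + v"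
proof -
  have j: "j \<in> {..<n}" using assms by auto
  have "(\<Sum>k<n. (f(j:=v)) k) = (f(j:=v)) j + (\<Sum>k\<in>{..<n}-{j}. (f(j:=v)) k)"
    by (rule sum.remove) (use j in auto)
  also have "\<dots> = v + (\<Sum>k\<in>{..<n}-{j}. (f(j:=v)) k)" by simp
  also have "(\<Sum>k\<in>{..<n}-{j}. (f(j:=v)) k) = (\<Sum>k\<in>{..<n}-{j}. f k)"
    by (rule sum.cong) auto
  finally show ?thesis using sum.remove[OF _ j, of f] by simp
qed

lemma card_filter_real:
  "finite X \<Longrightarrow> real (card {x\<in>X. P x}) = (\<Sum>x\<in>X. if P x then 1 else 0)"
  by (simp add: sum.inter_filter[symmetric])

lemma dc:
  fixes g :: "(nat \<Rightarrow> nat) \<Rightarrow> real"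
  shows "real (Suc i) * (\<Sum>y\<in>lev n (Suc i). g y) =
    (\<Sum>x\<in>lev n i. \<Sum>j<n. if x j < 2 then real (x j + 1) * g (x(j := x j + 1)) else 0)"
proof -
  let ?X = "lev n i" and ?Y = "lev n (Suc i)"
  have "real (Suc i) * (\<Sum>y\<in>?Y. g y) = (\<Sum>y\<in>?Y. real (Suc i) * g y)"
    by (simp add: sum_distrib_left)
  also have "\<dots> = (\<Sum>y\<in>?Y. \<Sum>j<n. real (y j) * g y)"
  proof (rule sum.cong)
    fix y assume "y \<in> ?Y"
    then have "(\<Sum>j<n. y j) = Suc i" unfolding lev_def by auto
    then have "real (Suc i) = (\<Sum>j<n. real (y j))" by (metis of_nat_sum)
    then show "real (Suc i) * g y = (\<Sum>j<n. real (y j) * g y)"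
      by (simp add: sum_distrib_right)
  qed simp
  also have "\<dots> = (\<Sum>j<n. \<Sum>y\<in>?Y. real (y j) * g y)" by (rule sum.swap)
  also have "\<dots> = (\<Sum>j<n. \<Sum>x\<in>?X. if x j < 2 then real (x j + 1) * g (x(j := x j + 1)) else 0)"
  proof (rule sum.cong)
    fix j assume jn: "j \<in> {..<n}"
    let ?h = "\<lambda>x::nat\<Rightarrow>nat. x(j := x j + 1)"
    have bij: "bij_betw ?h {x\<in>?X. x j < 2} {y\<in>?Y. 0 < y j}"
    proof (rule bij_betw_byWitness[where f'="\<lambda>y. y(j := y j - 1)"])
      show "\<forall>a\<in>{x\<in>?X. x j < 2}. (?h a)(j := ?h a j - 1) = a" by auto
      show "\<forall>a'\<in>{y\<in>?Y. 0 < y j}. ?h (a'(j := a' j - 1)) = a'" by auto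
      show "?h ` {x\<in>?X. x j < 2} \<subseteq> {y\<in>?Y. 0 < y j}"
      proof
        fix y assume "y \<in> ?h ` {x\<in>?X. x j < 2}"
        then obtain x where x: "x \<in> ?X" "x j < 2" "y = ?h x" by auto
        have "(\<Sum>k<n. y k) + x j = (\<Sum>k<n. x k) + (x j + 1)"
          using sum_upd[of j n x "x j + 1"] jn x by simp
        moreover have "(\<Sum>k<n. x k) = i" using x unfolding lev_def by auto
        moreover have "y \<in> cube n" using x jn unfolding lev_def cube_def by auto
        ultimately show "y \<in> {y\<in>?Y. 0 < y j}" using x unfolding lev_def by auto
      qed
      show "(\<lambda>y. y(j := y j - 1)) ` {y\<in>?Y. 0 < y j} \<subseteq> {x\<in>?X. x j < 2}"
      proof
        fix x assume "x \<in> (\<lambda>y. y(j := y j - 1)) ` {y\<in>?Y. 0 < y j}"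
        then obtain y where y: "y \<in> ?Y" "0 < y j" "x = y(j := y j - 1)" by auto
        have "(\<Sum>k<n. x k) + y j = (\<Sum>k<n. y k) + (y j - 1)"
          using sum_upd[of j n y "y j - 1"] jn y by simp
        moreover have "(\<Sum>k<n. y k) = Suc i" using y unfolding lev_def by auto
        moreover have "x \<in> cube n" using y jn unfolding lev_def cube_def by auto
        moreover have "y j \<le> 2" using y jn unfolding lev_def cube_def by auto
        ultimately show "x \<in> {x\<in>?X. x j < 2}" using y unfolding lev_def by auto
      qed
    qed
    have "(\<Sum>y\<in>?Y. real (y j) * g y) = (\<Sum>y\<in>?Y. if 0 < y j then real (y j) * g y else 0)"
      by (rule sum.cong) auto
    also have "\<dots> = (\<Sum>y\<in>{y\<in>?Y. 0 < y j}. real (y j) * g y)"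
      by (simp add: sum.inter_filter finite_lev)
    also have "\<dots> = (\<Sum>x\<in>{x\<in>?X. x j < 2}. real (?h x j) * g (?h x))"
      by (rule sum.reindex_bij_betw[OF bij, symmetric])
    also have "\<dots> = (\<Sum>x\<in>{x\<in>?X. x j < 2}. real (x j + 1) * g (x(j := x j + 1)))"
      by simp
    also have "\<dots> = (\<Sum>x\<in>?X. if x j < 2 then real (x j + 1) * g (x(j := x j + 1)) else 0)"
      by (rule sum.inter_filter[OF finite_lev])
    finally show "(\<Sum>y\<in>?Y. real (y j) * g y) = (\<Sum>x\<in>?X. if x j < 2 then real (x j + 1) * g (x(j := x j + 1)) else 0)" .
  qed simp
  also have "\<dots> = (\<Sum>x\<in>?X. \<Sum>j<n. if x j < 2 then real (x j + 1) * g (x(j := x j + 1)) else 0)"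
    by (rule sum.swap)
  finally show ?thesis .
qed

lemma twos_sum:
  "real (twos n x) = (\<Sum>j<n. if x j = 2 then 1 else 0)"
proof -
  have "{j. j < n \<and> x j = 2} = {j\<in>{..<n}. x j = 2}" by auto
  then have "real (twos n x) = real (card {j\<in>{..<n}. x j = 2})" unfolding twos_def by simp
  also have "\<dots> = (\<Sum>j<n. if x j = 2 then 1 else 0)" by (rule card_filter_real) simp
  finally show ?thesis .
qed

lemma twos_upd:
  assumes "j < n" "x j < 2"
  shows "twos n (x(j := x j + 1)) = twos n x + (if x j = 1 then 1 else 0)"
proof -
  let ?S = "{k. k < n \<and> x k = 2}"
  have fin: "finite ?S" by auto
  show ?thesis
  proof (cases "x j = 1")
    case True
    have "{k. k < n \<and> (x(j := x j + 1)) k = 2} = insert j ?S" using True assms by auto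
    moreover have "j \<notin> ?S" using True by auto
    ultimately show ?thesis unfolding twos_def using fin True by simp
  next
    case False
    have "{k. k < n \<and> (x(j := x j + 1)) k = 2} = ?S" using False assms by auto
    then show ?thesis unfolding twos_def using False by simp
  qed
qed

lemma lev_facts:
  assumes "x \<in> lev n i"
  shows "real i = (\<Sum>j<n. real (x j))" "\<And>j. j < n \<Longrightarrow> x j \<le> 2"
  using assms unfolding lev_def cube_def by (auto simp flip: of_nat_sum)

lemma ones_sum:
  assumes "x \<in> lev n i"
  shows "(\<Sum>j<n. if x j = 1 then (2::real) else 0) = 2 * (real i - 2 * real (twos n x))"
proof -
  have "real i = (\<Sum>j<n. (if x j = 1 then 1 else 0) + 2 * (if x j = 2 then 1 else 0))"
    unfolding lev_facts(1)[OF assms]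
  proof (rule sum.cong)
    fix j assume "j \<in> {..<n}"
    then have "x j \<le> 2" using lev_facts(2)[OF assms] by auto
    then show "real (x j) = (if x j = 1 then 1 else 0) + 2 * (if x j = 2 then 1 else 0)"
      by (cases "x j") (auto, presburger?)
  qed simp
  then have "real i = (\<Sum>j<n. if x j = 1 then 1 else 0) + 2 * real (twos n x)"
    by (simp add: sum.distrib sum_distrib_left twos_sum)
  moreover have "(\<Sum>j<n. if x j = 1 then (2::real) else 0) = 2 * (\<Sum>j<n. if x j = 1 then 1 else 0)"
    unfolding sum_distrib_left by (rule sum.cong) auto
  ultimately show ?thesis by simp
qed

lemma E_sum:
  assumes "x \<in> lev n i"
  shows "(\<Sum>j<n. if x j < 2 then real (x j + 1) * 1 else 0) = real n + real i - 3 * real (twos n x)"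
proof -
  have "(\<Sum>j<n. if x j < 2 then real (x j + 1) * 1 else 0)
      = (\<Sum>j<n. real (x j) + 1 - 3 * (if x j = 2 then 1 else 0))"
  proof (rule sum.cong)
    fix j assume "j \<in> {..<n}"
    then have "x j \<le> 2" using lev_facts(2)[OF assms] by auto
    then show "(if x j < 2 then real (x j + 1) * 1 else 0) = real (x j) + 1 - 3 * (if x j = 2 then 1 else 0)"
      by auto
  qed simp
  also have "\<dots> = (\<Sum>j<n. real (x j)) + real n - 3 * (\<Sum>j<n. if x j = 2 then 1 else 0)"
    by (simp add: sum.distrib sum_subtractf sum_distrib_left)
  finally show ?thesis using lev_facts(1)[OF assms] twos_sum[of n x] by simp
qed

lemma H_sum:
  assumes "x \<in> lev n i"
  shows "(\<Sum>j<n. if x j < 2 then real (x j + 1) * (if s + 1 \<le> twos n (x(j := x j + 1)) then 1 else 0) else 0)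
    = (if s + 1 \<le> twos n x then real n + real i - 3 * real (twos n x)
       else if twos n x = s then 2 * (real i - 2 * real s) else 0)"
proof -
  consider "s + 1 \<le> twos n x" | "twos n x = s" | "twos n x < s" by linarith
  then show ?thesis
  proof cases
    case 1
    have "(\<Sum>j<n. if x j < 2 then real (x j + 1) * (if s + 1 \<le> twos n (x(j := x j + 1)) then 1 else 0) else 0)
      = (\<Sum>j<n. if x j < 2 then real (x j + 1) * 1 else 0)" (is "(\<Sum>j<n. ?l j) = (\<Sum>j<n. ?r j)")
    proof (rule sum.cong)
      fix j assume "j \<in> {..<n}"
      then show "?l j = ?r j" using twos_upd[of j n x] 1 by auto
    qed simp
    then show ?thesis using E_sum[OF assms] 1 by simp
  next
    case 2
    have "(\<Sum>j<n. if x j < 2 then real (x j + 1) * (if s + 1 \<le> twos n (x(j := x j + 1)) then 1 else 0) else 0)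
      = (\<Sum>j<n. if x j = 1 then 2 else 0)" (is "(\<Sum>j<n. ?l j) = (\<Sum>j<n. ?r j)")
    proof (rule sum.cong)
      fix j assume "j \<in> {..<n}"
      then show "?l j = ?r j" using twos_upd[of j n x] 2 by auto
    qed simp
    then show ?thesis using ones_sum[OF assms] 2 by simp
  next
    case 3
    have "(\<Sum>j<n. if x j < 2 then real (x j + 1) * (if s + 1 \<le> twos n (x(j := x j + 1)) then 1 else 0) else 0)
      = (\<Sum>j<n. 0)" (is "(\<Sum>j<n. ?l j) = (\<Sum>j<n. ?r j)")
    proof (rule sum.cong)
      fix j assume "j \<in> {..<n}"
      then show "?l j = ?r j" using twos_upd[of j n x] 3 by auto
    qed simp
    then show ?thesis using 3 by simp
  qed
qed

theorem mainTheorem11: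
  fixes n i s :: nat
  assumes "n \<ge> 5" and "1 \<le> i" and "i \<le> n - 1" and "real s < real i / 2"
  shows "w n i s \<le> 2 / (real (i + 1) * real (card (lev n (i + 1))))"
proof -
  let ?X = "lev n i" and ?Y = "lev n (i+1)"
  have finX: "finite ?X" and finY: "finite ?Y" by (rule finite_lev)+
  define T where "T x = real (twos n x)" for x
  define E where "E x = real n + real i - 3 * T x" for x
  define G where "G x = (if s + 1 \<le> twos n x then 1 else (0::real))" for x
  define K where "K = real n + real i - 3 * (real s + 1)"
  define A where "A = real (card ?X)"
  define Age where "Age = real (card (levge n i (s+1)))"
  define As where "As = real (card (levs n i s))"
  define B where "B = real (card ?Y)"
  define Bge where "Bge = real (card (levge n (i+1) (s+1)))"
  define S where "S = (\<Sum>x\<in>?X. E x)"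
  define S1 where "S1 = (\<Sum>x\<in>?X. G x * E x)"
  have si: "2 * real s < real i" using assms(4) by simp
  have A_eq: "A = (\<Sum>x\<in>?X. 1)" unfolding A_def by simp
  have Age_eq: "Age = (\<Sum>x\<in>?X. G x)"
    unfolding Age_def levge_def G_def using card_filter_real[OF finX] by simp
  have As_eq: "As = (\<Sum>x\<in>?X. if twos n x = s then 1 else 0)"
    unfolding As_def levs_def using card_filter_real[OF finX] by simp
  have B_eq: "real (i+1) * B = S"
  proof -
    have "real (i+1) * B = real (Suc i) * (\<Sum>y\<in>lev n (Suc i). 1)" unfolding B_def by simp
    also have "\<dots> = (\<Sum>x\<in>?X. \<Sum>j<n. if x j < 2 then real (x j + 1) * 1 else 0)"
      by (rule dc)
    also have "\<dots> = S" unfolding S_def E_def T_def by (rule sum.cong) (auto simp: E_sum)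
    finally show ?thesis .
  qed
  have Bge_eq: "real (i+1) * Bge = S1 + 2 * (real i - 2 * real s) * As"
  proof -
    have "real (i+1) * Bge = real (Suc i) * (\<Sum>y\<in>lev n (Suc i). if s + 1 \<le> twos n y then 1 else 0)"
      unfolding Bge_def levge_def using card_filter_real[OF finY] by simp
    also have "\<dots> = (\<Sum>x\<in>?X. \<Sum>j<n. if x j < 2 then real (x j + 1) * (if s + 1 \<le> twos n (x(j := x j + 1)) then 1 else 0) else 0)"
      by (rule dc)
    also have "\<dots> = (\<Sum>x\<in>?X. G x * E x + 2 * (real i - 2 * real s) * (if twos n x = s then 1 else 0))"
      by (rule sum.cong) (auto simp: H_sum G_def E_def T_def)
    also have "\<dots> = S1 + 2 * (real i - 2 * real s) * As"
      unfolding S1_def As_eq by (simp add: sum.distrib sum_distrib_left)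
    finally show ?thesis .
  qed
  have S1_le: "S1 \<le> K * Age"
    unfolding S1_def Age_eq sum_distrib_left
    by (rule sum_mono) (auto simp: G_def E_def T_def K_def)
  have S0_ge: "K * (A - Age) \<le> S - S1"
    unfolding S1_def S_def Age_eq A_eq sum_distrib_left sum_subtractf[symmetric]
    by (rule sum_mono) (auto simp: G_def E_def T_def K_def)
  have Age_nn: "0 \<le> Age" unfolding Age_def by simp
  have AAge: "0 \<le> A - Age" unfolding Age_eq A_eq sum_subtractf[symmetric]
    by (rule sum_nonneg) (auto simp: G_def)
  have key: "A * S1 \<le> Age * S"
  proof -
    have "(A - Age) * S1 \<le> (A - Age) * (K * Age)" using mult_left_mono[OF S1_le AAge] .
    moreover have "Age * (K * (A - Age)) \<le> Age * (S - S1)" using mult_left_mono[OF S0_ge Age_nn] .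
    ultimately show ?thesis by (simp add: algebra_simps)
  qed
  have main: "real (i+1) * (A * Bge - B * Age) \<le> 2 * As * A * (real i - 2 * real s)"
  proof -
    have "real (i+1) * (A * Bge - B * Age) = A * (real (i+1) * Bge) - (real (i+1) * B) * Age"
      by (simp add: algebra_simps)
    also have "\<dots> = A * S1 + 2 * (real i - 2 * real s) * As * A - S * Age"
      unfolding Bge_eq B_eq by (simp add: algebra_simps)
    finally show ?thesis using key by (simp add: algebra_simps)
  qed
  have wdef: "w n i s = (A * Bge - B * Age) / (As * A * B * (real i - 2 * real s))"
    unfolding w_def A_def Bge_def B_def Age_def As_def by simp
  have nn: "0 \<le> As" "0 \<le> A" "0 \<le> B" unfolding As_def A_def B_def by simp_all
  show ?thesis
  proof (cases "As * A * B * (real i - 2 * real s) = 0")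
    case True
    then have "w n i s = 0" unfolding wdef by simp
    moreover have "0 \<le> 2 / (real (i + 1) * real (card (lev n (i + 1))))" by simp
    ultimately show ?thesis by simp
  next
    case False
    then have pos: "0 < As" "0 < A" "0 < B" "0 < real i - 2 * real s" using nn si by auto
    have "(A * Bge - B * Age) / (As * A * B * (real i - 2 * real s)) \<le> 2 / (real (i + 1) * B)"
    proof -
      have d1: "0 < As * A * B * (real i - 2 * real s)" using pos by simp
      have d2: "0 < real (i + 1) * B" using pos by simp
      have "(A * Bge - B * Age) * (real (i + 1) * B) \<le> 2 * (As * A * B * (real i - 2 * real s))"
      proof -
        have "(A * Bge - B * Age) * (real (i + 1) * B) = (real (i+1) * (A * Bge - B * Age)) * B"
          by (simp add: algebra_simps)
        also have "\<dots> \<le> (2 * As * A * (real i - 2 * real s)) * B"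
          using mult_right_mono[OF main nn(3)] .
        finally show ?thesis by (simp add: algebra_simps)
      qed
      then have "((A * Bge - B * Age) * (real (i + 1) * B) - 2 * (As * A * B * (real i - 2 * real s)))
          / ((As * A * B * (real i - 2 * real s)) * (real (i + 1) * B)) \<le> 0"
        using d1 d2 by (intro divide_nonpos_pos) auto
      then show ?thesis using d1 d2 by (subst frac_le_eq) auto

    qed
    then show ?thesis unfolding wdef B_def by simp
  qed
qed

end
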